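(* Let $\alpha\in(0,\infty)$ and let $X_1,X_2,\ldots$ be i.i.d. random variables with $\Pr(X_i=0)=\Pr(X_i=\alpha)=1/2$. Let $\mu_\alpha$ be the distribution of the random continued fraction $[1,X_1,1,X_2,1,X_3,\ldots]$. If $\mu_\alpha$ is absolutely continuous with respect to Lebesgue measure with a density in $L^2$, then $\alpha\le \sqrt6/2-1$.
   Context: The continued fraction $[1,x_1,1,x_2,\ldots]=\cfrac{1}{1+\cfrac{1}{x_1+\cfrac{1}{1+\cfrac{1}{x_2+\cdots}}}}$ is defined as $\lim_{n\to\infty}T_{x_1}\circ\cdots\circ T_{x_n}(0)$ with $T_a(x):=\frac{x+a}{1+x+a}$; the limit exists by monotonicity in each $x_i$. *)

theory Defs
  imports "HOL-Probability.Probability"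
begin

definition cfT :: "real \<Rightarrow> real \<Rightarrow> real" where
  "cfT a x = (x + a) / (1 + x + a)"

text \<open>Finite approximant T_{x_1} o ... o T_{x_n} (0) (sequence indexed from 0).\<close>
definition cf_approx :: "(nat \<Rightarrow> real) \<Rightarrow> nat \<Rightarrow> real" where
  "cf_approx xs n = foldr (\<lambda>i. cfT (xs i)) [0..<n] 0"

text \<open>The continued fraction [1,x_1,1,x_2,...] as the limit of the approximants.\<close>
definition cf :: "(nat \<Rightarrow> real) \<Rightarrow> real" where
  "cf xs = lim (\<lambda>n. cf_approx xs n)"

definition mu :: "real \<Rightarrow> real measure" where
  "mu \<alpha> = distr (Pi\<^sub>M UNIV (\<lambda>_::nat. measure_pmf (pmf_of_set {0, \<alpha>}))) borel cf"

end

theory Submission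
  imports Defs "HOL-Analysis.Lebesgue_Integral_Substitution"
begin


lemma cfT_bounds: "a \<ge> 0 \<Longrightarrow> x \<ge> 0 \<Longrightarrow> 0 \<le> cfT a x \<and> cfT a x < 1"
  by (auto simp: cfT_def field_simps)

lemma cfT_mono: "a \<ge> 0 \<Longrightarrow> 0 \<le> x \<Longrightarrow> x \<le> y \<Longrightarrow> cfT a x \<le> cfT a y"
  by (auto simp: cfT_def field_simps)

definition Gf :: "(nat \<Rightarrow> real) \<Rightarrow> nat list \<Rightarrow> real \<Rightarrow> real" where
  "Gf xs l y = foldr (\<lambda>i. cfT (xs i)) l y"

lemma Gf_props:
  assumes "\<forall>i. xs i \<ge> 0" "y \<ge> 0"
  shows "0 \<le> Gf xs l y \<and> (l \<noteq> [] \<longrightarrow> Gf xs l y < 1) \<and> (\<forall>z. y \<le> z \<longrightarrow> Gf xs l y \<le> Gf xs l z)"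
proof (induction l)
  case Nil
  then show ?case using assms by (simp add: Gf_def)
next
  case (Cons i l)
  have e: "\<And>w. Gf xs (i # l) w = cfT (xs i) (Gf xs l w)" by (simp add: Gf_def)
  show ?case unfolding e using Cons assms
    by (metis cfT_bounds cfT_mono order.trans)
qed

lemma cf_approx_Gf: "cf_approx xs n = Gf xs [0..<n] 0"
  by (simp add: cf_approx_def Gf_def)

lemma cf_approx_conv:
  assumes "\<forall>i. xs i \<ge> 0"
  shows "(\<lambda>n. cf_approx xs n) \<longlonglongrightarrow> cf xs" "0 \<le> cf xs" "cf xs \<le> 1"
proof -
  have inc: "incseq (\<lambda>n. cf_approx xs n)"
  proof (rule incseq_SucI)
    fix n
    have "cf_approx xs (Suc n) = Gf xs [0..<n] (cfT (xs n) 0)"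
      by (simp add: cf_approx_def Gf_def)
    moreover have "0 \<le> cfT (xs n) 0" using cfT_bounds assms by auto
    ultimately show "cf_approx xs n \<le> cf_approx xs (Suc n)"
      using Gf_props[OF assms, of 0] by (simp add: cf_approx_Gf)
  qed
  have nn: "\<And>n. 0 \<le> cf_approx xs n"
    using Gf_props[OF assms, of 0] by (auto simp: cf_approx_Gf)
  have bnd: "\<And>n. cf_approx xs n \<le> 1"
  proof -
    fix n show "cf_approx xs n \<le> 1"
    proof (cases n)
      case 0 then show ?thesis by (simp add: cf_approx_def)
    next
      case (Suc m) then show ?thesis using Gf_props[OF assms, of 0 "[0..<n]"]
        by (auto simp: cf_approx_Gf less_imp_le)
    qed
  qed
  obtain L where L: "(\<lambda>n. cf_approx xs n) \<longlonglongrightarrow> L" using incseq_convergent[OF inc, of 1] bnd by blast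
  then have "cf xs = L" unfolding cf_def by (rule limI)
  then show "(\<lambda>n. cf_approx xs n) \<longlonglongrightarrow> cf xs" using L by simp
  show "0 \<le> cf xs" using \<open>cf xs = L\<close> L nn by (metis LIMSEQ_le_const)
  show "cf xs \<le> 1" using \<open>cf xs = L\<close> L bnd by (metis LIMSEQ_le_const2)
qed

lemma cf_approx_Suc: "cf_approx (case_nat s \<omega>) (Suc n) = cfT s (cf_approx \<omega> n)"
  unfolding cf_approx_def by (simp add: upt_conv_Cons map_Suc_upt[symmetric] foldr_map o_def del: upt_Suc)

lemma cf_case_nat:
  assumes "\<forall>i. \<omega> i \<ge> 0" "s \<ge> 0"
  shows "cf (case_nat s \<omega>) = cfT s (cf \<omega>)"
proof -
  have nn: "\<forall>i. case_nat s \<omega> i \<ge> 0" using assms by (simp split: nat.split)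
  have L: "(\<lambda>n. cf_approx \<omega> n) \<longlonglongrightarrow> cf \<omega>" "0 \<le> cf \<omega>" using cf_approx_conv[OF assms(1)] by auto
  have "(\<lambda>n. cfT s (cf_approx \<omega> n)) \<longlonglongrightarrow> cfT s (cf \<omega>)"
    unfolding cfT_def using L assms(2)
    by (intro tendsto_intros) auto
  then have "(\<lambda>n. cf_approx (case_nat s \<omega>) (Suc n)) \<longlonglongrightarrow> cfT s (cf \<omega>)"
    by (simp add: cf_approx_Suc)
  then have "(\<lambda>n. cf_approx (case_nat s \<omega>) n) \<longlonglongrightarrow> cfT s (cf \<omega>)"
    by (rule LIMSEQ_imp_Suc)
  moreover have "(\<lambda>n. cf_approx (case_nat s \<omega>) n) \<longlonglongrightarrow> cf (case_nat s \<omega>)"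
    using cf_approx_conv[OF nn] by simp
  ultimately show ?thesis using LIMSEQ_unique by blast
qed



lemma comp_meas[measurable]:
  "(\<lambda>xs. xs i) \<in> borel_measurable (Pi\<^sub>M UNIV (\<lambda>_::nat. measure_pmf p))"
proof -
  have "(\<lambda>xs. xs i) \<in> measurable (Pi\<^sub>M UNIV (\<lambda>_::nat. measure_pmf p)) (measure_pmf p)"
    by (rule measurable_component_singleton) simp
  moreover have "(\<lambda>x. x) \<in> measurable (measure_pmf p) borel" by simp
  ultimately show ?thesis by (rule measurable_compose)
qed

lemma foldr_cfT_meas:
  "(\<lambda>xs. foldr (\<lambda>i. cfT (xs i)) l y) \<in> borel_measurable (Pi\<^sub>M UNIV (\<lambda>_::nat. measure_pmf p))"
proof (induction l)
  case Nil then show ?case by simp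
next
  case (Cons i l)
  let ?F = "\<lambda>xs. foldr (\<lambda>i. cfT (xs i)) l y"
  have e: "(\<lambda>xs. foldr (\<lambda>i. cfT (xs i)) (i#l) y) = (\<lambda>xs. (?F xs + xs i) / (1 + ?F xs + xs i))"
    by (simp add: cfT_def)
  show ?case unfolding e
    by (intro borel_measurable_divide borel_measurable_add Cons comp_meas borel_measurable_const)
qed

lemma cf_meas[measurable]: "cf \<in> borel_measurable (Pi\<^sub>M UNIV (\<lambda>_::nat. measure_pmf p))"
proof -
  have [measurable]: "\<And>n. (\<lambda>xs. cf_approx xs n) \<in> borel_measurable (Pi\<^sub>M UNIV (\<lambda>_::nat. measure_pmf p))"
    unfolding cf_approx_def by (rule foldr_cfT_meas)
  show ?thesis unfolding cf_def by (rule borel_measurable_lim_metric) fact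
qed

lemma selfsim:
  fixes \<alpha> :: real and g :: "real \<Rightarrow> ennreal"
  assumes a: "\<alpha> > 0" and g[measurable]: "g \<in> borel_measurable borel"
  shows "(\<integral>\<^sup>+y. g y \<partial>mu \<alpha>) = (\<integral>\<^sup>+y. g (cfT 0 y) \<partial>mu \<alpha>) / 2 + (\<integral>\<^sup>+y. g (cfT \<alpha> y) \<partial>mu \<alpha>) / 2"
    and "(\<integral>\<^sup>+y. g y \<partial>mu \<alpha>) = (\<integral>\<^sup>+y. g y * indicator {0..1} y \<partial>mu \<alpha>)"
    and "emeasure (mu \<alpha>) UNIV = 1"
proof -
  define p where "p = pmf_of_set {0, \<alpha>}"
  define M where "M = measure_pmf p"
  define S where "S = Pi\<^sub>M UNIV (\<lambda>_::nat. M)"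
  have setp: "set_pmf p = {0, \<alpha>}" unfolding p_def by (simp add: set_pmf_of_set)
  interpret SS: sequence_space M unfolding M_def
    by unfold_locales
  interpret SP: prob_space S unfolding S_def by (rule SS.prob_space_axioms)
  have mu: "mu \<alpha> = distr S borel cf" unfolding mu_def S_def M_def p_def ..
  have cfm[measurable]: "cf \<in> borel_measurable S" unfolding S_def M_def by (rule cf_meas)
  have AEn: "AE \<omega> in S. \<forall>i. \<omega> i \<in> {0, \<alpha>}"
  proof (subst AE_all_countable, intro allI)
    fix i
    show "AE \<omega> in S. \<omega> i \<in> {0, \<alpha>}" unfolding S_def
      
    proof (rule SS.AE_component)
      show "AE x in M. x \<in> {0, \<alpha>}" unfolding M_def setp[symmetric] by (rule AE_measure_pmf)
    qed simp
  qed
  have AEn': "AE \<omega> in S. \<forall>i. \<omega> i \<ge> 0" using AEn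
  proof eventually_elim
    case (elim \<omega>)
    show ?case
    proof
      fix i show "\<omega> i \<ge> 0" using elim[rule_format, of i] a by auto
    qed
  qed
  have int: "\<And>h. h \<in> borel_measurable borel \<Longrightarrow> (\<integral>\<^sup>+y. h y \<partial>mu \<alpha>) = (\<integral>\<^sup>+\<omega>. h (cf \<omega>) \<partial>S)"
    unfolding mu by (subst nn_integral_distr) auto
  show "emeasure (mu \<alpha>) UNIV = 1" unfolding mu
    by (subst emeasure_distr) (auto simp: SP.emeasure_space_1[unfolded space_borel])
  show "(\<integral>\<^sup>+y. g y \<partial>mu \<alpha>) = (\<integral>\<^sup>+y. g y * indicator {0..1} y \<partial>mu \<alpha>)"
    apply (subst (1 2) int)
    apply simp_all
    apply (rule nn_integral_cong_AE)
    using AEn' by eventually_elim (use cf_approx_conv in auto)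
  have it: "S = distr (M \<Otimes>\<^sub>M S) S (\<lambda>(s, \<omega>). case_nat s \<omega>)"
    unfolding S_def by (rule SS.PiM_iter[symmetric])
  have cnm[measurable]: "(\<lambda>(s, \<omega>). case_nat s \<omega>) \<in> measurable (M \<Otimes>\<^sub>M S) S"
    unfolding S_def
  proof (rule measurable_PiM_single')
    fix i :: nat
    show "(\<lambda>z. (case z of (s, \<omega>) \<Rightarrow> case_nat s \<omega>) i) \<in> measurable (M \<Otimes>\<^sub>M Pi\<^sub>M UNIV (\<lambda>_. M)) M"
    proof (cases i)
      case 0 then show ?thesis by (simp add: split_beta)
    next
      case (Suc j)
      have "(\<lambda>\<omega>. \<omega> j) \<in> measurable (Pi\<^sub>M UNIV (\<lambda>_::nat. M)) M"
        by (rule measurable_component_singleton) simp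
      then have "(\<lambda>z. snd z j) \<in> measurable (M \<Otimes>\<^sub>M Pi\<^sub>M UNIV (\<lambda>_. M)) M"
        by (rule measurable_compose[OF measurable_snd])
      then show ?thesis using Suc by (simp add: split_beta)
    qed
  qed (auto simp: space_pair_measure space_PiM M_def)
  have "(\<integral>\<^sup>+y. g y \<partial>mu \<alpha>) = (\<integral>\<^sup>+\<omega>. g (cf \<omega>) \<partial>S)" by (rule int) simp
  also have "\<dots> = (\<integral>\<^sup>+z. g (cf (case_nat (fst z) (snd z))) \<partial>(M \<Otimes>\<^sub>M S))"
    apply (subst (1) it)
    apply (subst nn_integral_distr)
    apply (auto simp: split_beta)
    done
  also have "\<dots> = (\<integral>\<^sup>+s. \<integral>\<^sup>+\<omega>. g (cf (case_nat s \<omega>)) \<partial>S \<partial>M)"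
    by (subst SP.nn_integral_fst[symmetric]) auto
  also have "\<dots> = (\<integral>\<^sup>+s. \<integral>\<^sup>+\<omega>. g (cfT s (cf \<omega>)) \<partial>S \<partial>M)"
  proof (rule nn_integral_cong_AE)
    have "AE s in M. s \<in> {0, \<alpha>}" unfolding M_def setp[symmetric] by (rule AE_measure_pmf)
    then show "AE s in M. (\<integral>\<^sup>+\<omega>. g (cf (case_nat s \<omega>)) \<partial>S) = (\<integral>\<^sup>+\<omega>. g (cfT s (cf \<omega>)) \<partial>S)"
    proof eventually_elim
      case (elim s)
      then have "s \<ge> 0" using a by auto
      show ?case
        apply (rule nn_integral_cong_AE)
        using AEn' by eventually_elim (simp add: cf_case_nat \<open>s \<ge> 0\<close>)
    qed
  qed
  also have "\<dots> = ((\<integral>\<^sup>+\<omega>. g (cfT 0 (cf \<omega>)) \<partial>S) + (\<integral>\<^sup>+\<omega>. g (cfT \<alpha> (cf \<omega>)) \<partial>S)) / 2"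
    unfolding M_def p_def using a by (subst nn_integral_pmf_of_set) auto
  also have "\<dots> = (\<integral>\<^sup>+y. g (cfT 0 y) \<partial>mu \<alpha>) / 2 + (\<integral>\<^sup>+y. g (cfT \<alpha> y) \<partial>mu \<alpha>) / 2"
    by (subst (1 2) int) (auto simp: cfT_def add_divide_distrib_ennreal)
  finally show "(\<integral>\<^sup>+y. g y \<partial>mu \<alpha>) = (\<integral>\<^sup>+y. g (cfT 0 y) \<partial>mu \<alpha>) / 2 + (\<integral>\<^sup>+y. g (cfT \<alpha> y) \<partial>mu \<alpha>) / 2" .
qed



definition cc :: real where "cc = 1 / sqrt 6"
definition rho :: "real \<Rightarrow> real" where "rho u = u\<^sup>2 / 2 + cc * u + (1/2 - cc)"
definition PP :: "real \<Rightarrow> real \<Rightarrow> real" where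
  "PP a u = (u+a)\<^sup>2/2 + cc*(u+a)*(1+u+a) + (1/2-cc)*(1+u+a)\<^sup>2"

lemma cc_facts: "cc > 0" "cc\<^sup>2 = 1/6" "cc < 1/2" "cc > 1/3" "3 * cc - 1 = sqrt 6 / 2 - 1"
proof -
  have s: "sqrt 6 > 0" by simp
  have s2: "(sqrt 6)\<^sup>2 = 6" by simp
  show "cc > 0" unfolding cc_def by simp
  show c2: "cc\<^sup>2 = 1/6" unfolding cc_def by (simp add: power_divide)
  have "cc > 0" unfolding cc_def by simp
  show "cc < 1/2"
  proof (rule ccontr)
    assume "\<not> cc < 1/2"
    then have "cc * cc \<ge> 1/2 * (1/2)" by (intro mult_mono) auto
    then show False using c2 by (simp add: power2_eq_square)
  qed
  show "cc > 1/3"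
  proof (rule ccontr)
    assume "\<not> cc > 1/3"
    then have "cc * cc \<le> 1/3 * (1/3)" using \<open>cc > 0\<close> by (intro mult_mono) auto
    then show False using c2 by (simp add: power2_eq_square)
  qed
  show "3 * cc - 1 = sqrt 6 / 2 - 1" unfolding cc_def using s s2
    by (simp add: field_simps power2_eq_square)
qed

lemma rho_bounds: "0 \<le> u \<Longrightarrow> u \<le> 1 \<Longrightarrow> 0 \<le> rho u \<and> rho u \<le> 1"
proof -
  assume u: "0 \<le> u" "u \<le> 1"
  have c: "cc > 0" "cc < 1/2" using cc_facts by auto
  have "u * u \<le> 1" using u by (intro mult_le_one) auto
  moreover have "cc * u \<le> cc" using u c by (simp add: mult_left_le)
  moreover have "0 \<le> cc * u" using u c by simp
  moreover have "0 \<le> u * u" by simp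
  ultimately show ?thesis using c unfolding rho_def power2_eq_square by linarith
qed

lemma PP_eq: "a \<ge> 0 \<Longrightarrow> u \<ge> 0 \<Longrightarrow> (1+u+a)\<^sup>2 * rho (cfT a u) = PP a u"
proof -
  assume "a \<ge> 0" "u \<ge> 0"
  then have D: "1+u+a > 0" by simp
  have e: "cfT a u = (u+a)/(1+u+a)" unfolding cfT_def by (simp add: add_ac)
  have D': "1+u+a \<noteq> 0" using D by simp
  define t where "t = (u+a)/(1+u+a)"
  have k: "(1+u+a) * t = u+a" unfolding t_def using D' by simp
  have "(1+u+a)\<^sup>2 * rho t = ((1+u+a) * t)\<^sup>2/2 + cc*((1+u+a) * t)*(1+u+a) + (1/2-cc)*(1+u+a)\<^sup>2"
    unfolding rho_def by (simp add: algebra_simps power2_eq_square)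
  then show ?thesis unfolding k PP_def e t_def[symmetric] by (simp add: algebra_simps)
qed

lemma PP_ident: "PP 0 u + PP (3*cc-1) u = 4 * rho u"
proof -
  have "PP 0 u + PP (3*cc-1) u - 4 * rho u = 6 * cc\<^sup>2 - 1"
    unfolding PP_def rho_def power2_eq_square by (simp add: field_simps)
  then show ?thesis using cc_facts(2) by simp
qed

lemma PP_key:
  assumes "\<alpha> > 3*cc - 1" "0 \<le> u"
  shows "PP 0 u + PP \<alpha> u \<ge> 4 * rho u + (PP \<alpha> 0 - PP (3*cc-1) 0)"
    and "PP \<alpha> 0 - PP (3*cc-1) 0 > 0"
proof -
  have c: "cc > 1/3" "cc < 1/2" using cc_facts by auto
  have "PP \<alpha> u - PP \<alpha> 0 \<ge> PP (3*cc-1) u - PP (3*cc-1) 0"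
  proof -
    have "PP \<alpha> u - PP \<alpha> 0 - (PP (3*cc-1) u - PP (3*cc-1) 0) = 2 * u * (\<alpha> - (3*cc-1))"
      unfolding PP_def power2_eq_square by (simp add: field_simps)
    moreover have "2 * u * (\<alpha> - (3*cc-1)) \<ge> 0" using assms by simp
    ultimately show ?thesis by linarith
  qed
  then show "PP 0 u + PP \<alpha> u \<ge> 4 * rho u + (PP \<alpha> 0 - PP (3*cc-1) 0)" using PP_ident[of u] by linarith
  show "PP \<alpha> 0 - PP (3*cc-1) 0 > 0"
  proof -
    define b where "b = 3*cc - 1"
    have b0: "b > 0" using c unfolding b_def by simp
    have "PP \<alpha> 0 - PP b 0 = (\<alpha> - b) * ((\<alpha>+b)/2 + cc*(1+\<alpha>+b) + (1/2-cc)*(2+\<alpha>+b))"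
      unfolding PP_def power2_eq_square by (simp add: field_simps)
    moreover have "(\<alpha>+b)/2 + cc*(1+\<alpha>+b) + (1/2-cc)*(2+\<alpha>+b) > 0"
      using b0 assms c b_def by (intro add_pos_nonneg add_nonneg_nonneg mult_nonneg_nonneg) auto
    ultimately show ?thesis using assms b_def by simp
  qed
qed



lemma cfT_deriv: "a \<ge> 0 \<Longrightarrow> u \<ge> 0 \<Longrightarrow> (cfT a has_real_derivative 1/(1+u+a)\<^sup>2) (at u)"
proof -
  assume "a \<ge> 0" "u \<ge> 0"
  then have ne: "1 + u + a \<noteq> 0" by simp
  have e: "cfT a = (\<lambda>x. (x + a) / (1 + x + a))" by (simp add: cfT_def fun_eq_iff)
  have "((\<lambda>x. (x + a) / (1 + x + a)) has_real_derivative (1 * (1+u+a) - 1 * (u+a)) / ((1+u+a)^Suc (Suc 0))) (at u)"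
    by (rule DERIV_quotient) (auto intro!: derivative_eq_intros simp: ne)
  then show ?thesis unfolding e by (simp add: power2_eq_square)
qed

lemma cfT_meas[measurable]: "cfT a \<in> borel_measurable borel"
  unfolding cfT_def by measurable

lemma subst_T:
  fixes h :: "real \<Rightarrow> ennreal"
  assumes a: "a \<ge> 0" and h: "h \<in> borel_measurable borel"
  shows "(\<integral>\<^sup>+y. h y * indicator {cfT a 0..cfT a 1} y \<partial>lborel) =
         (\<integral>\<^sup>+u. h (cfT a u) * ennreal (1/(1+u+a)\<^sup>2) * indicator {0..1} u \<partial>lborel)"
proof (rule nn_integral_substitution_aux[OF h])
  show "\<And>x. x \<in> {0..1} \<Longrightarrow> (cfT a has_real_derivative 1/(1+x+a)\<^sup>2) (at x)"
    using cfT_deriv a by auto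
  show "continuous_on {0..1} (\<lambda>x. 1/(1+x+a)\<^sup>2)"
    using a by (intro continuous_intros) auto
qed auto



definition phi :: "real \<Rightarrow> real \<Rightarrow> real" where "phi a y = y/(1-y) - a"

lemma T_facts:
  assumes "a \<ge> 0" "0 \<le> u"
  shows "phi a (cfT a u) = u" "1/(1 - cfT a u)\<^sup>2 = (1+u+a)\<^sup>2"
proof -
  have ne: "1+u+a \<noteq> 0" "1 + u + a > 0" using assms by auto
  have "1 - cfT a u = 1/(1+u+a)" unfolding cfT_def using ne by (simp add: field_simps)
  then show "1/(1 - cfT a u)\<^sup>2 = (1+u+a)\<^sup>2" by (simp add: power_divide)
  show "phi a (cfT a u) = u" unfolding phi_def cfT_def using ne by (simp add: field_simps)
qed

lemma T_range: "a \<ge> 0 \<Longrightarrow> {cfT a 0..cfT a 1} \<subseteq> {0..1}"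
  using cfT_bounds[of a 0] cfT_bounds[of a 1] by auto

lemma main:
  fixes \<alpha> :: real and f :: "real \<Rightarrow> real"
  assumes a: "\<alpha> > 0" and fm[measurable]: "f \<in> borel_measurable borel" and fnn: "\<And>x. 0 \<le> f x"
    and mu: "mu \<alpha> = density lborel (\<lambda>x. ennreal (f x))"
    and sq: "integrable lborel (\<lambda>x. (f x)\<^sup>2)"
    and big: "\<alpha> > 3*cc - 1"
  shows False
proof -
  define F where "F y = ennreal (f y)" for y
  have Fm[measurable]: "F \<in> borel_measurable borel" unfolding F_def by measurable
  have dens: "\<And>k. k \<in> borel_measurable borel \<Longrightarrow> (\<integral>\<^sup>+y. k y \<partial>mu \<alpha>) = (\<integral>\<^sup>+y. F y * k y \<partial>lborel)"
    unfolding mu F_def by (subst nn_integral_density) auto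
  have D1a: "(\<integral>\<^sup>+y. F y * k y \<partial>lborel) = (\<integral>\<^sup>+y. F y * k (cfT 0 y) \<partial>lborel) / 2 + (\<integral>\<^sup>+y. F y * k (cfT \<alpha> y) \<partial>lborel) / 2"
    if [measurable]: "k \<in> borel_measurable borel" for k
    using selfsim(1)[OF a that] by (simp add: dens)
  have D1b: "(\<integral>\<^sup>+y. F y * k y \<partial>lborel) = (\<integral>\<^sup>+y. F y * k y * indicator {0..1} y \<partial>lborel)"
    if [measurable]: "k \<in> borel_measurable borel" for k
    using selfsim(2)[OF a that] by (simp add: dens mult.assoc)
  have D1c: "(\<integral>\<^sup>+y. F y \<partial>lborel) = 1"
  proof -
    have sp: "space (mu \<alpha>) = UNIV" by (simp add: mu)
    have "(\<integral>\<^sup>+y. F y \<partial>lborel) = (\<integral>\<^sup>+y. 1 \<partial>mu \<alpha>)" using dens[of "\<lambda>_. 1"] by simp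
    also have "\<dots> = emeasure (mu \<alpha>) UNIV" by (simp add: sp)
    finally show ?thesis using selfsim(3)[OF a, of "\<lambda>_. 0"] by simp
  qed
  define g where "g a y = f (phi a y) * (1/(1-y)\<^sup>2) * indicator {cfT a 0..cfT a 1} y" for a y
  have gm[measurable]: "(\<lambda>y. g a y) \<in> borel_measurable borel" for a
    unfolding g_def phi_def by measurable
  have gnn: "g a y \<ge> 0" for a y unfolding g_def using fnn by simp
  have D2: "(\<integral>\<^sup>+u. F u * k (cfT a u) \<partial>lborel) = (\<integral>\<^sup>+y. ennreal (g a y) * k y \<partial>lborel)"
    if [measurable]: "k \<in> borel_measurable borel" and a0: "a \<ge> 0" for k a
  proof -
    define h where "h y = F (phi a y) * ennreal (1/(1-y)\<^sup>2) * k y" for y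
    have hm: "h \<in> borel_measurable borel" unfolding h_def F_def phi_def by measurable
    have "(\<integral>\<^sup>+u. F u * k (cfT a u) \<partial>lborel) = (\<integral>\<^sup>+u. F u * k (cfT a u) * indicator {0..1} u \<partial>lborel)"
      by (rule D1b) measurable
    also have "\<dots> = (\<integral>\<^sup>+u. h (cfT a u) * ennreal (1/(1+u+a)\<^sup>2) * indicator {0..1} u \<partial>lborel)"
    proof (rule nn_integral_cong)
      fix u :: real
      show "F u * k (cfT a u) * indicator {0..1} u = h (cfT a u) * ennreal (1/(1+u+a)\<^sup>2) * indicator {0..1} u"
      proof (cases "u \<in> {0..1}")
        case True
        then have u0: "u \<ge> 0" by simp
        have p: "(1+u+a)\<^sup>2 > 0" using u0 a0 by simp
        have "ennreal ((1+u+a)\<^sup>2) * ennreal (1/(1+u+a)\<^sup>2) = 1"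
          using p by (simp add: ennreal_mult[symmetric])
        then show ?thesis using True unfolding h_def T_facts[OF a0 u0]
          by (simp add: mult.assoc mult.left_commute[of "ennreal ((1+u+a)\<^sup>2)"])
      qed simp
    qed
    also have "\<dots> = (\<integral>\<^sup>+y. h y * indicator {cfT a 0..cfT a 1} y \<partial>lborel)"
      by (rule subst_T[OF a0 hm, symmetric])
    also have "\<dots> = (\<integral>\<^sup>+y. ennreal (g a y) * k y \<partial>lborel)"
    proof (rule nn_integral_cong)
      fix y :: real
      have "ennreal (g a y) = ennreal (f (phi a y)) * ennreal (1/(1-y)\<^sup>2) * indicator {cfT a 0..cfT a 1} y"
        unfolding g_def indicator_def using fnn[of "phi a y"] by (simp add: ennreal_mult[symmetric])
      then show "h y * indicator {cfT a 0..cfT a 1} y = ennreal (g a y) * k y"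
        by (simp add: h_def F_def mult_ac)
    qed
    finally show ?thesis .
  qed
  have D3: "AE y in lborel. 2 * f y = g 0 y + g \<alpha> y"
  proof -
    have "AE y in lborel. ennreal (2 * f y) = ennreal (g 0 y + g \<alpha> y)"
    proof (rule sigma_finite_measure.density_unique2[OF sigma_finite_lborel])
      fix A :: "real set" assume A: "A \<in> sets lborel"
      then have Am[measurable]: "A \<in> sets borel" by simp
      have im: "indicator A \<in> borel_measurable borel" by measurable
      have X: "(\<integral>\<^sup>+u. F u * indicator A (cfT a u) \<partial>lborel) = (\<integral>\<^sup>+y. ennreal (g a y) * indicator A y \<partial>lborel)"
        if "a \<ge> 0" for a
        using D2[OF im that] .
      have "(\<integral>\<^sup>+x\<in>A. ennreal (2 * f x) \<partial>lborel) = 2 * (\<integral>\<^sup>+x. F x * indicator A x \<partial>lborel)"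
        unfolding F_def using fnn by (subst nn_integral_cmult[symmetric]) (auto simp: ennreal_mult mult.assoc)
      also have "\<dots> = 2 * ((\<integral>\<^sup>+y. ennreal (g 0 y) * indicator A y \<partial>lborel) / 2 + (\<integral>\<^sup>+y. ennreal (g \<alpha> y) * indicator A y \<partial>lborel) / 2)"
        using D1a[OF im] X[of 0] X[of \<alpha>] a by simp
      also have "\<dots> = (\<integral>\<^sup>+y. ennreal (g 0 y) * indicator A y \<partial>lborel) + (\<integral>\<^sup>+y. ennreal (g \<alpha> y) * indicator A y \<partial>lborel)"
        by (simp add: distrib_left ennreal_divide_times[symmetric] mult.commute[of 2] ennreal_divide_times)
      also have "\<dots> = (\<integral>\<^sup>+x\<in>A. ennreal (g 0 x + g \<alpha> x) \<partial>lborel)"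
        using gnn by (subst nn_integral_add[symmetric]) (auto simp: distrib_right)
      finally show "(\<integral>\<^sup>+x\<in>A. ennreal (2 * f x) \<partial>lborel) = (\<integral>\<^sup>+x\<in>A. ennreal (g 0 x + g \<alpha> x) \<partial>lborel)" .
    next
      have [measurable]: "(\<lambda>y. g 0 y) \<in> borel_measurable borel" "(\<lambda>y. g \<alpha> y) \<in> borel_measurable borel"
        by (rule gm)+
      show "(\<lambda>x. ennreal (g 0 x + g \<alpha> x)) \<in> borel_measurable lborel" by simp
      show "(\<lambda>x. ennreal (2 * f x)) \<in> borel_measurable lborel" by simp
    qed
    then show ?thesis
    proof eventually_elim
      case (elim y) show ?case
        by (rule ennreal_inj[THEN iffD1, OF _ _ elim]) (use fnn[of y] gnn[of 0 y] gnn[of \<alpha> y] in auto)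
    qed
  qed
  define ind where "ind y = indicat_real {0..1::real} y" for y :: real
  have D4: "(\<integral>\<^sup>+y. ennreal ((g a y)\<^sup>2 * rho y * ind y) \<partial>lborel) = (\<integral>\<^sup>+u. ennreal ((f u)\<^sup>2 * PP a u * ind u) \<partial>lborel)"
    if a0: "a \<ge> 0" for a
  proof -
    define h where "h y = ennreal ((f (phi a y))\<^sup>2 * (1/(1-y)\<^sup>2)\<^sup>2 * rho y)" for y
    have hm: "h \<in> borel_measurable borel" unfolding h_def phi_def rho_def by measurable
    have "(\<integral>\<^sup>+y. ennreal ((g a y)\<^sup>2 * rho y * ind y) \<partial>lborel) = (\<integral>\<^sup>+y. h y * indicator {cfT a 0..cfT a 1} y \<partial>lborel)"
    proof (rule nn_integral_cong)
      fix y :: real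
      show "ennreal ((g a y)\<^sup>2 * rho y * ind y) = h y * indicator {cfT a 0..cfT a 1} y"
      proof (cases "y \<in> {cfT a 0..cfT a 1}")
        case True
        then have "y \<in> {0..1}" using T_range[OF a0] by auto
        then show ?thesis using True unfolding g_def h_def ind_def
          by (simp add: power_divide)
      qed (simp add: g_def)
    qed
    also have "\<dots> = (\<integral>\<^sup>+u. h (cfT a u) * ennreal (1/(1+u+a)\<^sup>2) * indicator {0..1} u \<partial>lborel)"
      by (rule subst_T[OF a0 hm])
    also have "\<dots> = (\<integral>\<^sup>+u. ennreal ((f u)\<^sup>2 * PP a u * ind u) \<partial>lborel)"
    proof (rule nn_integral_cong)
      fix u :: real
      show "h (cfT a u) * ennreal (1/(1+u+a)\<^sup>2) * indicator {0..1} u = ennreal ((f u)\<^sup>2 * PP a u * ind u)"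
      proof (cases "u \<in> {0..1}")
        case True
        then have u0: "u \<ge> 0" by simp
        have r: "0 \<le> rho (cfT a u)" using rho_bounds cfT_bounds[OF a0 u0] by (simp add: less_imp_le)
        have p: "(1+u+a)\<^sup>2 > 0" using u0 a0 by simp
        have "(f u)\<^sup>2 * ((1+u+a)\<^sup>2)\<^sup>2 * rho (cfT a u) * (1/(1+u+a)\<^sup>2) = (f u)\<^sup>2 * ((1+u+a)\<^sup>2 * rho (cfT a u))"
          using p by (simp add: power2_eq_square field_simps)
        then have "h (cfT a u) * ennreal (1/(1+u+a)\<^sup>2) = ennreal ((f u)\<^sup>2 * PP a u)"
          unfolding h_def T_facts[OF a0 u0] PP_eq[OF a0 u0, symmetric]
          using r p by (simp add: ennreal_mult[symmetric])
        then show ?thesis using True unfolding ind_def by simp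
      qed (simp add: ind_def)
    qed
    finally show ?thesis .
  qed
  have indm[measurable]: "ind \<in> borel_measurable borel" unfolding ind_def by measurable
  define d where "d = PP \<alpha> 0 - PP (3*cc-1) 0"
  have d0: "d > 0" using PP_key(2)[OF big, of 0] unfolding d_def by simp
  define I where "I = (\<integral>\<^sup>+y. ennreal ((f y)\<^sup>2 * rho y * ind y) \<partial>lborel)"
  define J where "J = (\<integral>\<^sup>+y. ennreal ((f y)\<^sup>2 * ind y) \<partial>lborel)"
  have g0m[measurable]: "(\<lambda>y. g 0 y) \<in> borel_measurable borel" and gam[measurable]: "(\<lambda>y. g \<alpha> y) \<in> borel_measurable borel"
    by (rule gm)+
  have rhom[measurable]: "rho \<in> borel_measurable borel" unfolding rho_def by measurable
  have PPm[measurable]: "PP a \<in> borel_measurable borel" for a unfolding PP_def by measurable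
  have Ifin: "I < \<infinity>"
  proof -
    have "I \<le> (\<integral>\<^sup>+y. ennreal (norm ((f y)\<^sup>2)) \<partial>lborel)"
      unfolding I_def
    proof (rule nn_integral_mono)
      fix y
      have "(f y)\<^sup>2 * rho y * ind y \<le> (f y)\<^sup>2"
      proof (cases "y \<in> {0..1}")
        case True
        then have "rho y \<le> 1" using rho_bounds by auto
        then show ?thesis using True unfolding ind_def by (simp add: mult_left_le)
      qed (simp add: ind_def)
      then show "ennreal ((f y)\<^sup>2 * rho y * ind y) \<le> ennreal (norm ((f y)\<^sup>2))" by (simp add: ennreal_leI)
    qed
    also have "\<dots> < \<infinity>" using sq unfolding integrable_iff_bounded by simp
    finally show ?thesis .
  qed
  have s1: "I = (\<integral>\<^sup>+y. ennreal (((g 0 y + g \<alpha> y)/2)\<^sup>2 * rho y * ind y) \<partial>lborel)"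
    unfolding I_def
  proof (rule nn_integral_cong_AE)
    show "AE y in lborel. ennreal ((f y)\<^sup>2 * rho y * ind y) = ennreal (((g 0 y + g \<alpha> y)/2)\<^sup>2 * rho y * ind y)"
      using D3
    proof eventually_elim
      case (elim y)
      have e: "(g 0 y + g \<alpha> y)/2 = f y" using elim by simp
      show ?case unfolding e ..
    qed
  qed
  have s2: "(\<integral>\<^sup>+y. ennreal (((g 0 y + g \<alpha> y)/2)\<^sup>2 * rho y * ind y) \<partial>lborel) \<ge> (\<integral>\<^sup>+y. (ennreal ((g 0 y)\<^sup>2 * rho y * ind y) + ennreal ((g \<alpha> y)\<^sup>2 * rho y * ind y)) * ennreal (1/4) \<partial>lborel)"
  proof (rule nn_integral_mono)
    fix y
    show "(ennreal ((g 0 y)\<^sup>2 * rho y * ind y) + ennreal ((g \<alpha> y)\<^sup>2 * rho y * ind y)) * ennreal (1/4) \<le> ennreal (((g 0 y + g \<alpha> y)/2)\<^sup>2 * rho y * ind y)"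
    proof (cases "y \<in> {0..1}")
      case True
      then have r: "rho y \<ge> 0" using rho_bounds by auto
      have i: "ind y = 1" using True unfolding ind_def by simp
      have q: "((g 0 y)\<^sup>2 + (g \<alpha> y)\<^sup>2) / 4 \<le> ((g 0 y + g \<alpha> y)/2)\<^sup>2"
        using gnn[of 0 y] gnn[of \<alpha> y] by (simp add: power2_eq_square field_simps)
      have "((g 0 y)\<^sup>2 * rho y + (g \<alpha> y)\<^sup>2 * rho y) * (1/4) \<le> ((g 0 y + g \<alpha> y)/2)\<^sup>2 * rho y"
        using mult_right_mono[OF q r] by (simp add: field_simps)
      then show ?thesis unfolding i using r
        by (simp add: ennreal_mult[symmetric] ennreal_plus[symmetric] ennreal_leI del: ennreal_plus)
    qed (simp add: ind_def)
  qed
  have s3: "(\<integral>\<^sup>+y. (ennreal ((g 0 y)\<^sup>2 * rho y * ind y) + ennreal ((g \<alpha> y)\<^sup>2 * rho y * ind y)) * ennreal (1/4) \<partial>lborel)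
      = ((\<integral>\<^sup>+y. ennreal ((g 0 y)\<^sup>2 * rho y * ind y) \<partial>lborel) + (\<integral>\<^sup>+y. ennreal ((g \<alpha> y)\<^sup>2 * rho y * ind y) \<partial>lborel)) * ennreal (1/4)"
    by (subst nn_integral_multc) (simp_all add: nn_integral_add)
  have s4: "((\<integral>\<^sup>+y. ennreal ((g 0 y)\<^sup>2 * rho y * ind y) \<partial>lborel) + (\<integral>\<^sup>+y. ennreal ((g \<alpha> y)\<^sup>2 * rho y * ind y) \<partial>lborel)) * ennreal (1/4) = ((\<integral>\<^sup>+u. ennreal ((f u)\<^sup>2 * PP 0 u * ind u) \<partial>lborel) + (\<integral>\<^sup>+u. ennreal ((f u)\<^sup>2 * PP \<alpha> u * ind u) \<partial>lborel)) * ennreal (1/4)"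
    using D4[of 0] D4[of \<alpha>] a by simp
  have s5: "((\<integral>\<^sup>+u. ennreal ((f u)\<^sup>2 * PP 0 u * ind u) \<partial>lborel) + (\<integral>\<^sup>+u. ennreal ((f u)\<^sup>2 * PP \<alpha> u * ind u) \<partial>lborel)) * ennreal (1/4) = (\<integral>\<^sup>+u. (ennreal ((f u)\<^sup>2 * PP 0 u * ind u) + ennreal ((f u)\<^sup>2 * PP \<alpha> u * ind u)) * ennreal (1/4) \<partial>lborel)"
    by (subst nn_integral_multc) (simp_all add: nn_integral_add)
  have s6: "(\<integral>\<^sup>+u. (ennreal ((f u)\<^sup>2 * PP 0 u * ind u) + ennreal ((f u)\<^sup>2 * PP \<alpha> u * ind u)) * ennreal (1/4) \<partial>lborel) \<ge> (\<integral>\<^sup>+u. ennreal ((f u)\<^sup>2 * rho u * ind u) + ennreal (d/4) * ennreal ((f u)\<^sup>2 * ind u) \<partial>lborel)"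
  proof (rule nn_integral_mono)
    fix u
    show "ennreal ((f u)\<^sup>2 * rho u * ind u) + ennreal (d/4) * ennreal ((f u)\<^sup>2 * ind u) \<le> (ennreal ((f u)\<^sup>2 * PP 0 u * ind u) + ennreal ((f u)\<^sup>2 * PP \<alpha> u * ind u)) * ennreal (1/4)"
    proof (cases "u \<in> {0..1}")
      case True
      then have u0: "u \<ge> 0" by simp
      have r: "rho u \<ge> 0" using rho_bounds True by auto
      have i: "ind u = 1" using True unfolding ind_def by simp
      have P0: "PP 0 u \<ge> 0" using PP_eq[of 0 u] u0 rho_bounds[of "cfT 0 u"] cfT_bounds[of 0 u]
        by (metis less_imp_le mult_nonneg_nonneg zero_le_power2 order.refl)
      have Pa: "PP \<alpha> u \<ge> 0" using PP_eq[of \<alpha> u] u0 a rho_bounds[of "cfT \<alpha> u"] cfT_bounds[of \<alpha> u]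
        by (metis less_imp_le mult_nonneg_nonneg zero_le_power2)
      have k: "PP 0 u + PP \<alpha> u \<ge> 4 * rho u + d" using PP_key(1)[OF big u0] unfolding d_def .
      have "(f u)\<^sup>2 * rho u + d/4 * (f u)\<^sup>2 \<le> ((f u)\<^sup>2 * PP 0 u + (f u)\<^sup>2 * PP \<alpha> u) * (1/4)"
      proof -
        have "(f u)\<^sup>2 * (4 * rho u + d) \<le> (f u)\<^sup>2 * (PP 0 u + PP \<alpha> u)"
          using k by (intro mult_left_mono) auto
        then show ?thesis by (simp add: field_simps)
      qed
      then show ?thesis unfolding i using r P0 Pa d0
        by (simp add: ennreal_mult[symmetric] ennreal_plus[symmetric] ennreal_leI del: ennreal_plus)
    qed (simp add: ind_def)
  qed
  have s7: "(\<integral>\<^sup>+u. ennreal ((f u)\<^sup>2 * rho u * ind u) + ennreal (d/4) * ennreal ((f u)\<^sup>2 * ind u) \<partial>lborel) = I + ennreal (d/4) * J"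
    unfolding I_def J_def by (simp add: nn_integral_add nn_integral_cmult)
  have "I + ennreal (d/4) * J \<le> I"
  proof -
    note s7[symmetric]
    also note s6
    also note s5[symmetric]
    also note s4[symmetric]
    also note s3[symmetric]
    also note s2
    also note s1[symmetric]
    finally show ?thesis .
  qed
  then have "I + ennreal (d/4) * J \<le> I + 0" by simp
  then have "I = \<infinity> \<or> ennreal (d/4) * J \<le> 0" by (simp only: ennreal_add_left_cancel_le)
  then have "ennreal (d/4) * J = 0" using Ifin by auto
  then have "J = 0" using d0 by (simp add: mult_eq_0_iff)
  then have "AE y in lborel. ennreal ((f y)\<^sup>2 * ind y) = 0" unfolding J_def
    by (subst nn_integral_0_iff_AE[symmetric]) simp_all
  then have "AE y in lborel. F y * indicator {0..1} y = 0"
  proof eventually_elim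
    case (elim y) then show ?case unfolding F_def ind_def using fnn[of y]
      by (auto simp: indicator_def split: if_splits)
  qed
  then have "(\<integral>\<^sup>+y. F y * indicator {0..1} y \<partial>lborel) = 0"
    by (subst nn_integral_0_iff_AE) simp_all
  moreover have "(\<integral>\<^sup>+y. F y * indicator {0..1} y \<partial>lborel) = 1"
    using D1b[of "\<lambda>_. 1"] D1c by simp
  ultimately show False by simp
qed


theorem proposition3p1:
  fixes \<alpha> :: real
  assumes "\<alpha> > 0"
    and "\<exists>f :: real \<Rightarrow> real. f \<in> borel_measurable borel \<and> (\<forall>x. 0 \<le> f x) \<and>
           mu \<alpha> = density lborel (\<lambda>x. ennreal (f x)) \<and>
           integrable lborel (\<lambda>x. (f x)\<^sup>2)"
  shows "\<alpha> \<le> sqrt 6 / 2 - 1"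
proof (rule ccontr)
  assume "\<not> \<alpha> \<le> sqrt 6 / 2 - 1"
  then have big: "\<alpha> > 3 * cc - 1" using cc_facts(5) by simp
  obtain f :: "real \<Rightarrow> real" where f: "f \<in> borel_measurable borel" "\<forall>x. 0 \<le> f x"
    "mu \<alpha> = density lborel (\<lambda>x. ennreal (f x))" "integrable lborel (\<lambda>x. (f x)\<^sup>2)"
    using assms(2) by blast
  show False
    by (rule main[OF assms(1) f(1) _ f(3) f(4) big]) (use f(2) in auto)
qed

end
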